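(* For $\psi=\log$ one has $\frac12\le C_{\log}\le1$, and for $\psi=\sqrt{\cdot}$ one has $C_{\sqrt{\cdot}}=0$.
   Context: For $\psi\in C^1((0,\infty))$ and $x,y>0$, $\widetilde{\psi}(x,y):=[\psi'(x)+\psi'(y)](1-xy)+x[\psi(y)-\psi(1/x)]+y[\psi(x)-\psi(1/y)]$, and $C_\psi:=\inf\frac{\widetilde{\psi}(x,y)}{(\psi(x)+\psi(y)-2\psi(1))^2}$, the infimum taken over all $x,y>0$ with $\psi(x)+\psi(y)\neq2\psi(1)$. *)

theory Defs
  imports "HOL-Analysis.Analysis" "HOL-Library.Extended_Real"
begin

definition psi_tilde :: "(real \<Rightarrow> real) \<Rightarrow> real \<Rightarrow> real \<Rightarrow> real" where
  "psi_tilde psi x y =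
     (deriv psi x + deriv psi y) * (1 - x * y) + x * (psi y - psi (1 / x)) + y * (psi x - psi (1 / y))"

text \<open>The infimum is taken in the extended reals, so it is the genuine infimum
  (possibly minus infinity).\<close>
definition C_psi :: "(real \<Rightarrow> real) \<Rightarrow> ereal" where
  "C_psi psi = (INF p \<in> {(x, y). x > 0 \<and> y > 0 \<and> psi x + psi y \<noteq> 2 * psi 1}.
      ereal (psi_tilde psi (fst p) (snd p) / (psi (fst p) + psi (snd p) - 2 * psi 1)^2))"

end

theory Submission
  imports Defs
begin

definition fu :: "real \<Rightarrow> real" where
  "fu u = exp (-u) - exp u + 2*u*exp u - u^2"

lemma fu_deriv: "(fu has_real_derivative (exp u - exp (-u) + 2*u*(exp u - 1))) (at u)"
  unfolding fu_def
  by (auto intro!: derivative_eq_intros simp: algebra_simps)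

lemma fu_pos_part: fixes u :: real assumes "0 \<le> u" shows "0 \<le> exp u - exp (-u) + 2*u*(exp u - 1)"
proof -
  have "exp (-u) \<le> exp u" using assms by simp
  moreover have "1 \<le> exp u" using assms by simp
  ultimately show ?thesis using assms by (simp add: mult_nonneg_nonneg)
qed

lemma fu_neg_part: fixes u :: real assumes "u \<le> 0" shows "exp u - exp (-u) + 2*u*(exp u - 1) \<le> 0"
proof -
  define w where "w = -u"
  have w: "0 \<le> w" using assms w_def by simp
  have q: "1 + w + w^2/2 \<le> exp w" using exp_lower_Taylor_quadratic[OF w] .
  have "2*w \<le> exp w + 1"
  proof -
    have "0 \<le> (w - 1)^2 + 3" by simp
    then have "2*w \<le> 2 + w + w^2/2" by (simp add: power2_eq_square algebra_simps)
    then show ?thesis using q by linarith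
  qed
  moreover have "0 \<le> exp w - 1" using w by simp
  ultimately have "2*w*(exp w - 1) \<le> (exp w + 1)*(exp w - 1)"
    by (simp add: mult_right_mono)
  then have "2*w*(exp w - 1) \<le> exp w * exp w - 1" by (simp add: algebra_simps)
  then have 1: "exp (-w) * (2*w*(exp w - 1)) \<le> exp (-w) * (exp w * exp w - 1)"
    by (rule mult_left_mono) simp
  have e: "exp w * exp (-w) = 1" by (simp add: exp_minus)
  have 2: "exp (-w) * (2*w*(exp w - 1)) = 2*w*(1 - exp (-w))"
    using e by algebra
  have 3: "exp (-w) * (exp w * exp w - 1) = exp w - exp (-w)"
    using e by algebra
  have "2*w*(1 - exp (-w)) \<le> exp w - exp (-w)" using 1 2 3 by simp
  then show ?thesis unfolding w_def by (simp add: algebra_simps)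
qed

lemma fu_nonneg: "0 \<le> fu u"
proof (cases "0 \<le> u")
  case True
  have "fu 0 \<le> fu u"
    by (rule deriv_nonneg_imp_mono[OF fu_deriv]) (use True fu_pos_part in auto)
  then show ?thesis by (simp add: fu_def)
next
  case False
  have "fu 0 \<le> fu u"
    by (rule deriv_nonpos_imp_antimono[OF fu_deriv]) (use False fu_neg_part in auto)
  then show ?thesis by (simp add: fu_def)
qed

lemma deriv_ln_pos: "0 < x \<Longrightarrow> deriv ln x = 1 / (x::real)"
  using DERIV_imp_deriv[OF DERIV_ln[of x]] by (simp add: inverse_eq_divide)

lemma deriv_sqrt_pos: "0 < x \<Longrightarrow> deriv sqrt x = inverse (sqrt x) / 2"
  by (rule DERIV_imp_deriv) (rule DERIV_real_sqrt)

lemma ln_lower: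
  assumes x: "0 < x" and y: "0 < y" and ne: "ln x + ln y \<noteq> 2 * ln 1"
  shows "1/2 \<le> psi_tilde ln x y / (ln x + ln y - 2 * ln 1)^2"
proof -
  define S where "S = ln x + ln y"
  define u where "u = S/2"
  define r where "r = exp u"
  have r: "0 < r" unfolding r_def by simp
  have Sne: "S \<noteq> 0" using ne S_def by simp
  have xy: "x*y = r^2"
  proof -
    have "r^2 = exp u * exp u" unfolding r_def by (simp add: power2_eq_square)
    also have "\<dots> = exp S" unfolding u_def by (simp add: exp_add[symmetric])
    also have "\<dots> = x * y" unfolding S_def using x y by (simp add: exp_add)
    finally show ?thesis by simp
  qed
  have expm: "exp (-u) = 1/r" unfolding r_def by (simp add: exp_minus field_simps)
  have f: "0 \<le> 1/r - r + 2*u*r - u^2" using fu_nonneg[of u] unfolding fu_def expm r_def by simp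
  have pt: "psi_tilde ln x y = (x+y)*(1/(x*y) - 1 + S)"
    unfolding psi_tilde_def S_def using x y
    by (simp add: deriv_ln_pos ln_div field_simps)
  have e2: "1 - 2*u \<le> 1/r^2"
  proof -
    have "1 + (-2*u) \<le> exp (-2*u)" by (rule exp_ge_add_one_self)
    also have "exp (-2*u) = 1/r^2" unfolding r_def
      by (simp add: exp_minus power2_eq_square exp_add[symmetric] field_simps)
    finally show ?thesis by simp
  qed
  have am: "2*r \<le> x + y"
  proof -
    have "(x+y)^2 - (2*r)^2 = (x-y)^2" using xy by (simp add: power2_eq_square algebra_simps)
    moreover have "0 \<le> (x-y)^2" by simp
    ultimately have "(2*r)^2 \<le> (x+y)^2" by linarith
    moreover have "0 \<le> x + y" using x y by linarith
    ultimately show ?thesis by (rule power2_le_imp_le)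
  qed
  have eq: "2*r*(1/r^2 - 1 + 2*u) = 2*(1/r - r + 2*u*r)"
    using r by (simp add: power2_eq_square field_simps)
  have "2*u^2 \<le> 2*r*(1/r^2 - 1 + 2*u)"
  proof -
    have "u^2 \<le> 1/r - r + 2*u*r" using f by simp
    then show ?thesis unfolding eq by simp
  qed
  also have "\<dots> \<le> (x+y)*(1/r^2 - 1 + 2*u)"
    using am e2 by (intro mult_right_mono) auto
  finally have main: "S^2/2 \<le> psi_tilde ln x y"
    unfolding pt xy u_def by (simp add: power2_eq_square field_simps)
  have "0 < S^2" using Sne by simp
  then show ?thesis using main unfolding S_def[symmetric]
    by (simp add: field_simps)
qed

lemma sqrt_nonneg_ratio:
  assumes x: "0 < x" and y: "0 < y"
  shows "0 \<le> psi_tilde sqrt x y / (sqrt x + sqrt y - 2 * sqrt 1)^2"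
proof -
  define a where "a = sqrt x"
  define b where "b = sqrt y"
  have a: "0 < a" and b: "0 < b" using x y a_def b_def by auto
  have xa: "x = a^2" and yb: "y = b^2" using x y a_def b_def by auto
  have sa: "sqrt (1/x) = 1/a" "sqrt (1/y) = 1/b" using a_def b_def by (simp_all add: real_sqrt_divide)
  have d: "deriv sqrt x = inverse a / 2" "deriv sqrt y = inverse b / 2"
    using x y a_def b_def by (simp_all add: deriv_sqrt_pos)
  have "psi_tilde sqrt x y = (inverse a / 2 + inverse b / 2) * (1 - x*y) + x*(b - 1/a) + y*(a - 1/b)"
    unfolding psi_tilde_def d sa a_def[symmetric] b_def[symmetric] by simp
  also have "\<dots> = (inverse a / 2 + inverse b / 2) * (1 - a^2*b^2) + a^2*(b - 1/a) + b^2*(a - 1/b)"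
    unfolding xa yb ..
  also have "\<dots> = (a+b)*(a*b-1)^2/(2*a*b)"
    using a b by (simp add: field_simps power2_eq_square)
  finally have "0 \<le> psi_tilde sqrt x y" using a b by simp
  then show ?thesis by simp
qed

theorem mainTheorem17:
  shows "ereal (1/2) \<le> C_psi ln \<and> C_psi ln \<le> 1 \<and> C_psi sqrt = 0"
proof (intro conjI)
  show "ereal (1/2) \<le> C_psi ln"
    unfolding C_psi_def
  proof (rule INF_greatest)
    fix p assume "p \<in> {(x, y). x > 0 \<and> y > (0::real) \<and> ln x + ln y \<noteq> 2 * ln 1}"
    then show "ereal (1/2) \<le> ereal (psi_tilde ln (fst p) (snd p) / (ln (fst p) + ln (snd p) - 2 * ln 1)^2)"
      using ln_lower[of "fst p" "snd p"] by auto
  qed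
  show "C_psi ln \<le> 1"
  proof -
    have mem: "(1/2, 1/2) \<in> {(x, y). x > 0 \<and> y > (0::real) \<and> ln x + ln y \<noteq> 2 * ln 1}"
      by simp
    have pt: "psi_tilde ln (1/2) (1/2) = 3 - 2 * ln 2"
      unfolding psi_tilde_def by (simp add: deriv_ln_pos ln_div)
    have l: "2/3 \<le> ln (2::real)" by (rule ln2_ge_two_thirds)
    have "3 - 2 * ln 2 \<le> (2 * ln (2::real))^2"
    proof -
      have "(4/3)^2 \<le> (2 * ln (2::real))^2" using l by (intro power_mono) auto
      then have "16/9 \<le> (2 * ln (2::real))^2" by (simp add: power2_eq_square)
      then show ?thesis using l by linarith
    qed
    then have "psi_tilde ln (1/2) (1/2) / (ln (1/2) + ln (1/2) - 2 * ln 1)^2 \<le> 1"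
      using l by (simp add: pt ln_div power2_eq_square)
    then show ?thesis unfolding C_psi_def
      by (intro INF_lower2[OF mem]) simp
  qed
  show "C_psi sqrt = 0"
  proof (rule antisym)
    have mem: "(4, 1/4) \<in> {(x, y). x > 0 \<and> y > (0::real) \<and> sqrt x + sqrt y \<noteq> 2 * sqrt 1}"
    proof -
      have "sqrt (4::real) = 2" by (simp add: real_sqrt_unique)
      moreover have "sqrt (1/4::real) = 1/2" by (simp add: real_sqrt_divide real_sqrt_unique)
      ultimately show ?thesis by simp
    qed
    have s4: "sqrt (4::real) = 2" by (simp add: real_sqrt_unique)
    have s14: "sqrt (1/4::real) = 1/2" by (simp add: real_sqrt_divide real_sqrt_unique)
    have "psi_tilde sqrt 4 (1/4) = 0"
      unfolding psi_tilde_def using s4 s14 by simp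
    then show "C_psi sqrt \<le> 0" unfolding C_psi_def
      by (intro INF_lower2[OF mem]) (simp add: zero_ereal_def)
    show "0 \<le> C_psi sqrt" unfolding C_psi_def
      by (rule INF_greatest) (auto simp: zero_ereal_def intro: sqrt_nonneg_ratio[simplified])
  qed
qed

end
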